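(* Let $X=\{1,\ldots,K\}$. The family $f_n:X^n\to\mathbb{Q}^K$, $f_n(x)=(p_1(x),\ldots,p_K(x))$, is computable with infinite memory (with output set $Y=\mathbb{Q}^K$, or its subset $(\mathbb{Q}\cap[0,1])^K$, together with a default element).
   Context: Model of computation. Let $X$ (initial values), $Y$ (outputs), $M$ (messages) be sets and, for each integer $d\ge 0$, let $Z_d$ be a set (memory states); each of $Y$, $M$, $Z_d$ contains a distinguished element $\emptyset$. An automaton family is a sequence of maps $(A_d)_{d\ge0}$, $A_d: X\times Z_d\times Y\times M^d\to X\times Z_d\times Y\times M^d$, which leave the first coordinate unchanged. A network is a finite connected simple undirected graph $G=(V,E)$ with $V=\{1,\ldots,n\}$, together with a port labeling: for each node $i$ of degree $d(i)$, a bijection $\ell_i$ from the set of neighbors of $i$ to $\{1,\ldots,d(i)\}$. Given initial values $x_1,\ldots,x_n\in X$, the execution is: node $i$ has state $S_i(t)=(x_i,z_i(t),y_i(t),m_{i,1}(t),\ldots,m_{i,d(i)}(t))$ with $z_i(0)=y_i(0)=m_{i,k}(0)=\emptyset$ ($m_{i,p}(t)$ is the message $i$ sends through its port $p$), and $S_i(t+1)=A_{d(i)}(x_i,z_i(t),y_i(t),\mu_{i,1}(t),\ldots,\mu_{i,d(i)}(t))$, where if $j$ is the neighbor of $i$ with $\ell_i(j)=k$ then $\mu_{i,k}(t)=m_{j,\ell_j(i)}(t)$. An element $y^*\in Y$ is the final output of the execution if there is $t'$ with $y_i(t)=y^*$ for all nodes $i$ and all $t\ge t'$. Infinite memory: $X$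 and $M$ are finite, while the sets $Z_d$ and $Y$ may be countable. A family of functions $(f_n:X^n\to Y)_{n\ge1}$ is computable with infinite memory if there exists an automaton family with infinite memory such that for every $n$, every network with $n$ nodes (every connected graph and every port labeling), and every $x\in X^n$, the execution has a final output equal to $f_n(x_1,\ldots,x_n)$. Proportions. For $X=\{1,\ldots,K\}$ and $x\in X^n$, $p_k(x)=|\{i: x_i=k\}|/n$. *)

theory Defs
  imports Main "HOL-Library.Countable_Set"
begin

definition nbrs :: "(nat \<Rightarrow> nat \<Rightarrow> bool) \<Rightarrow> nat \<Rightarrow> nat set" where
  "nbrs E i = {j. E i j}"

definition deg :: "(nat \<Rightarrow> nat \<Rightarrow> bool) \<Rightarrow> nat \<Rightarrow> nat" where
  "deg E i = card (nbrs E i)"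

definition network :: "nat \<Rightarrow> (nat \<Rightarrow> nat \<Rightarrow> bool) \<Rightarrow> (nat \<Rightarrow> nat \<Rightarrow> nat) \<Rightarrow> bool" where
  "network n E l \<longleftrightarrow> n \<ge> 1
     \<and> (\<forall>a b. E a b \<longrightarrow> a \<in> {1..n} \<and> b \<in> {1..n})
     \<and> (\<forall>a b. E a b \<longrightarrow> E b a)
     \<and> (\<forall>a. \<not> E a a)
     \<and> (\<forall>a\<in>{1..n}. \<forall>b\<in>{1..n}. E\<^sup>*\<^sup>* a b)
     \<and> (\<forall>i\<in>{1..n}. bij_betw (l i) (nbrs E i) {1..deg E i})"

definition port_nbr :: "(nat \<Rightarrow> nat \<Rightarrow> bool) \<Rightarrow> (nat \<Rightarrow> nat \<Rightarrow> nat) \<Rightarrow> nat \<Rightarrow> nat \<Rightarrow> nat" where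
  "port_nbr E l i k = (THE j. E i j \<and> l i j = k)"

text \<open>An automaton family A d: given degree d, it maps (x, z, y, incoming messages (list of
  length d)) to the new (z, y, outgoing messages); the initial value x is left unchanged,
  so it is not part of the result. The state of node i at time t is (z, y, messages),
  where the p-th message (index p-1) is the one sent through port p.\<close>

primrec exec :: "(nat \<Rightarrow> 'x \<Rightarrow> 'z \<Rightarrow> 'y \<Rightarrow> 'm list \<Rightarrow> 'z \<times> 'y \<times> 'm list)
    \<Rightarrow> (nat \<Rightarrow> 'z) \<Rightarrow> 'y \<Rightarrow> 'm
    \<Rightarrow> (nat \<Rightarrow> nat \<Rightarrow> bool) \<Rightarrow> (nat \<Rightarrow> nat \<Rightarrow> nat) \<Rightarrow> (nat \<Rightarrow> 'x)
    \<Rightarrow> nat \<Rightarrow> nat \<Rightarrow> 'z \<times> 'y \<times> 'm list" where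
  "exec A z0 y0 m0 E l x 0 = (\<lambda>i. (z0 (deg E i), y0, replicate (deg E i) m0))"
| "exec A z0 y0 m0 E l x (Suc t) = (\<lambda>i.
     let S = exec A z0 y0 m0 E l x t in
     A (deg E i) (x i) (fst (S i)) (fst (snd (S i)))
       (map (\<lambda>k. let j = port_nbr E l i k in snd (snd (S j)) ! (l j i - 1)) [1..<deg E i + 1]))"

definition has_final_output where
  "has_final_output A z0 y0 m0 E l x n ystar \<longleftrightarrow>
     (\<exists>t'. \<forall>t\<ge>t'. \<forall>i\<in>{1..n}. fst (snd (exec A z0 y0 m0 E l x t i)) = ystar)"

text \<open>Initial values are naturals ranging over the
  finite set X; messages range over a finite set M of naturals with distinguished element m0;
  memory states are natural numbers (a countable set) with distinguished element z0 d for
  degree d; outputs range over the countable set Y with distinguished element y0.\<close>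

definition computable_inf_mem ::
  "nat set \<Rightarrow> 'y set \<Rightarrow> 'y \<Rightarrow> (nat \<Rightarrow> (nat \<Rightarrow> nat) \<Rightarrow> 'y) \<Rightarrow> bool" where
  "computable_inf_mem X Y y0 f \<longleftrightarrow> finite X \<and> countable Y \<and> y0 \<in> Y \<and>
    (\<exists>(A :: nat \<Rightarrow> nat \<Rightarrow> nat \<Rightarrow> 'y \<Rightarrow> nat list \<Rightarrow> nat \<times> 'y \<times> nat list)
       (z0 :: nat \<Rightarrow> nat) (M :: nat set) (m0 :: nat).
      finite M \<and> m0 \<in> M \<and>
      (\<forall>d x z y ms. fst (snd (A d x z y ms)) \<in> Y
                    \<and> length (snd (snd (A d x z y ms))) = d
                    \<and> set (snd (snd (A d x z y ms))) \<subseteq> M) \<and>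
      (\<forall>n E l x. network n E l \<and> (\<forall>i\<in>{1..n}. x i \<in> X) \<longrightarrow>
          has_final_output A z0 y0 m0 E l x n (f n x)))"

definition prop_k :: "nat \<Rightarrow> (nat \<Rightarrow> nat) \<Rightarrow> nat \<Rightarrow> rat" where
  "prop_k n x k = of_nat (card {i\<in>{1..n}. x i = k}) / of_nat n"

text \<open>Output set Q^K (vectors as lists of length K), with default element None.\<close>
definition Yset :: "nat \<Rightarrow> rat list option set" where
  "Yset K = insert None (Some ` {v. length v = K})"

definition proportions :: "nat \<Rightarrow> nat \<Rightarrow> (nat \<Rightarrow> nat) \<Rightarrow> rat list option" where
  "proportions K n x = Some (map (prop_k n x) [1..<K+1])"

end

theory Submission
  imports Defs Complex_Main
begin

definition Nof :: "nat \<Rightarrow> nat \<Rightarrow> nat" where "Nof K q = q div K + 1"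
definition kof :: "nat \<Rightarrow> nat \<Rightarrow> nat" where "kof K q = q mod K + 1"

definition sN :: "nat \<Rightarrow> nat" where
  "sN N = (LEAST s. (1 - (1 / of_nat (N+1)) ^ N) ^ s < (1::rat) / (2 * of_nat N ^ 2))"
definition RN :: "nat \<Rightarrow> nat" where "RN N = N * sN N"
definition LN :: "nat \<Rightarrow> nat" where "LN N = (N+1) ^ RN N"

definition rnd :: "nat \<Rightarrow> rat \<Rightarrow> rat" where
  "rnd N e = (SOME p. \<exists>a::int. \<exists>b::nat. 1 \<le> b \<and> b \<le> N \<and> p = of_int a / of_nat b
                         \<and> \<bar>e - p\<bar> < 1 / (2 * of_nat N ^ 2))"

definition bitm :: "nat \<Rightarrow> nat \<Rightarrow> nat" where "bitm u a = (if u < a then 1 else 0)"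

definition outv :: "nat \<Rightarrow> rat list \<Rightarrow> rat list option" where
  "outv K res = Some (map (\<lambda>k. res ! (k - 1)) [1..<K+1])"

type_synonym st = "(nat \<times> nat \<times> nat \<times> nat \<times> nat \<times> rat list) option"

definition nextc :: "nat \<Rightarrow> nat \<times> nat \<times> nat \<Rightarrow> nat \<times> nat \<times> nat" where
  "nextc K c = (case c of (q, r, u) \<Rightarrow>
     if Suc u < LN (Nof K q) then (q, r, Suc u)
     else if Suc r < RN (Nof K q) then (q, Suc r, 0) else (Suc q, 0, 0))"

definition stepA :: "nat \<Rightarrow> nat \<Rightarrow> nat \<Rightarrow> st \<Rightarrow> nat list \<Rightarrow> st \<times> rat list option \<times> nat list" where
  "stepA K d x s ms = (case s of
     None \<Rightarrow> (let a = (if x = kof K 0 then 1 else 0) in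
              (Some (0, 0, 0, a, 0, replicate K 0), outv K (replicate K 0), replicate d (bitm 0 a)))
   | Some (q, r, u, a, acc, res) \<Rightarrow> (let N = Nof K q; tot = acc + sum_list ms in
      if Suc u < LN N then (Some (q, r, Suc u, a, tot, res), outv K res, replicate d (bitm (Suc u) a))
      else (let a' = (N + 1 - d) * a + tot in
        if Suc r < RN N then (Some (q, Suc r, 0, a', 0, res), outv K res, replicate d (bitm 0 a'))
        else (let res' = res[q mod K := rnd N (of_nat a' / of_nat ((N+1) ^ RN N))];
                  b = (if x = kof K (Suc q) then 1 else 0) in
              (Some (Suc q, 0, 0, b, 0, res'), outv K res', replicate d (bitm 0 b))))))"

definition Aut :: "nat \<Rightarrow> nat \<Rightarrow> nat \<Rightarrow> nat \<Rightarrow> rat list option \<Rightarrow> nat list \<Rightarrow> nat \<times> rat list option \<times> nat list" where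
  "Aut K d x z y ms = (case stepA K d x (from_nat z) ms of (s', y', ms') \<Rightarrow> (to_nat s', y', ms'))"

definition z0 :: "nat \<Rightarrow> nat" where "z0 d = to_nat (None :: st)"

lemma Aut_props:
  "fst (snd (Aut K d x z y ms)) \<in> Yset K \<and> length (snd (snd (Aut K d x z y ms))) = d
   \<and> set (snd (snd (Aut K d x z y ms))) \<subseteq> {0,1}"
  unfolding Aut_def stepA_def Yset_def outv_def bitm_def
  by (auto simp: Let_def split: option.splits prod.splits)



lemma sN_prop:
  assumes "N \<ge> 1"
  shows "(1 - (1 / of_nat (N+1)) ^ N) ^ sN N < (1::rat) / (2 * of_nat N ^ 2) \<and> sN N \<ge> 1"
proof -
  define c :: rat where "c = 1 - (1 / of_nat (N+1)) ^ N"
  define e :: rat where "e = 1 / (2 * of_nat N ^ 2)"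
  have e0: "e > 0" using assms by (simp add: e_def)
  have c1: "c < 1" by (simp add: c_def)
  have "of_rat e > (0::real)" using e0 by simp
  moreover have "of_rat c < (1::real)" using c1 by (simp add: of_rat_less_1_iff)
  ultimately obtain s where "(of_rat c::real) ^ s < of_rat e" using real_arch_pow_inv by blast
  hence "c ^ s < e" by (metis of_rat_less of_rat_power)
  hence ex: "c ^ sN N < e" unfolding sN_def c_def e_def by (rule LeastI)
  have "(1::rat) \<le> of_nat N ^ 2" using assms by (simp add: one_le_power)
  hence "e < 1" unfolding e_def by (simp add: divide_simps)
  hence "sN N \<noteq> 0" using ex by (metis less_asym power_0)
  thus ?thesis using ex by (simp add: c_def e_def)
qed

lemma sN_pos: "N \<ge> 1 \<Longrightarrow> RN N \<ge> 1"
  using sN_prop[of N] by (simp add: RN_def)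

lemma LN_pos: "LN N \<ge> 1"
  by (simp add: LN_def)

lemma Nof_pos: "Nof K q \<ge> 1" by (simp add: Nof_def)

definition cc :: "nat \<Rightarrow> nat \<Rightarrow> nat \<times> nat \<times> nat" where
  "cc K m = (nextc K ^^ m) (0, 0, 0)"

lemma cc_Suc: "cc K (Suc m) = nextc K (cc K m)"
  by (simp add: cc_def)

lemma cc_bounds: "cc K m = (q, r, u) \<Longrightarrow> u < LN (Nof K q) \<and> r < RN (Nof K q)"
proof (induction m arbitrary: q r u)
  case 0
  then show ?case using LN_pos[of "Nof K 0"] sN_pos[OF Nof_pos[of K 0]] by (auto simp: cc_def)
next
  case (Suc m)
  obtain q' r' u' where c: "cc K m = (q', r', u')" by (cases "cc K m") auto
  from Suc.IH[OF c] Suc.prems c show ?case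
    using LN_pos[of "Nof K (Suc q')"] sN_pos[OF Nof_pos[of K "Suc q'"]]
    by (auto simp: cc_Suc nextc_def split: if_splits)
qed

lemma port_nbr_props:
  assumes net: "network n E l" and i: "i \<in> {1..n}" and k: "k \<in> {1..deg E i}"
  shows "E i (port_nbr E l i k) \<and> l i (port_nbr E l i k) = k"
proof -
  have b: "bij_betw (l i) (nbrs E i) {1..deg E i}" using net i by (simp add: network_def)
  then obtain j where j: "j \<in> nbrs E i" "l i j = k" using k by (metis bij_betw_iff_bijections)
  have "port_nbr E l i k = j" unfolding port_nbr_def
  proof (rule the_equality)
    show "E i j \<and> l i j = k" using j by (simp add: nbrs_def)
    fix j' assume "E i j' \<and> l i j' = k"
    then show "j' = j" using b j unfolding bij_betw_def inj_on_def nbrs_def by auto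
  qed
  then show ?thesis using j by (simp add: nbrs_def)
qed

lemma bij_port:
  assumes net: "network n E l" and i: "i \<in> {1..n}"
  shows "bij_betw (port_nbr E l i) {1..deg E i} (nbrs E i)"
proof -
  have b: "bij_betw (l i) (nbrs E i) {1..deg E i}" using net i by (simp add: network_def)
  have "bij_betw (inv_into (nbrs E i) (l i)) {1..deg E i} (nbrs E i)"
    using b by (rule bij_betw_inv_into)
  moreover have "\<And>k. k \<in> {1..deg E i} \<Longrightarrow> inv_into (nbrs E i) (l i) k = port_nbr E l i k"
  proof -
    fix k assume k: "k \<in> {1..deg E i}"
    have "port_nbr E l i k \<in> nbrs E i" using port_nbr_props[OF net i k] by (simp add: nbrs_def)
    moreover have "l i (port_nbr E l i k) = k" using port_nbr_props[OF net i k] by simp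
    ultimately show "inv_into (nbrs E i) (l i) k = port_nbr E l i k"
      using b by (metis bij_betw_def inv_into_f_f)
  qed
  ultimately show ?thesis by (metis bij_betw_cong)
qed

lemma nbrs_sub: "network n E l \<Longrightarrow> nbrs E i \<subseteq> {1..n}"
  by (auto simp: network_def nbrs_def)

lemma finite_nbrs: "network n E l \<Longrightarrow> finite (nbrs E i)"
  by (meson finite_atLeastAtMost finite_subset nbrs_sub)

lemma msg_sum:
  assumes net: "network n E l" and i: "i \<in> {1..n}"
    and S: "\<And>j. j \<in> nbrs E i \<Longrightarrow> snd (snd (S j)) = replicate (deg E j) (g j)"
  shows "sum_list (map (\<lambda>k. let j = port_nbr E l i k in snd (snd (S j)) ! (l j i - 1)) [1..<deg E i + 1])
         = (\<Sum>j\<in>nbrs E i. g j)"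
proof -
  have "map (\<lambda>k. let j = port_nbr E l i k in snd (snd (S j)) ! (l j i - 1)) [1..<deg E i + 1]
      = map (\<lambda>k. g (port_nbr E l i k)) [1..<deg E i + 1]"
  proof (rule map_cong[OF refl])
    fix k assume "k \<in> set [1..<deg E i + 1]"
    hence k: "k \<in> {1..deg E i}" by auto
    define j where "j = port_nbr E l i k"
    have Eij: "E i j" using port_nbr_props[OF net i k] j_def by simp
    hence jn: "j \<in> nbrs E i" by (simp add: nbrs_def)
    have jV: "j \<in> {1..n}" using Eij net by (simp add: network_def)
    have "E j i" using Eij net by (simp add: network_def)
    hence "i \<in> nbrs E j" by (simp add: nbrs_def)
    hence "l j i \<in> {1..deg E j}" using net jV unfolding network_def bij_betw_def by blast
    hence "l j i - 1 < deg E j" by auto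
    thus "(let j = port_nbr E l i k in snd (snd (S j)) ! (l j i - 1)) = g (port_nbr E l i k)"
      using S[OF jn] j_def by simp
  qed
  also have "sum_list \<dots> = (\<Sum>k\<in>{1..deg E i}. g (port_nbr E l i k))"
  proof -
    have "{1..<deg E i + 1} = {1..deg E i}" by auto
    thus ?thesis by (metis sum_set_upt_conv_sum_list_nat set_upt)
  qed
  also have "\<dots> = (\<Sum>j\<in>nbrs E i. g j)"
    using sum.reindex_bij_betw[OF bij_port[OF net i]] by simp
  finally show ?thesis .
qed



primrec Aseq :: "nat \<Rightarrow> (nat \<Rightarrow> nat \<Rightarrow> bool) \<Rightarrow> (nat \<Rightarrow> nat) \<Rightarrow> nat \<Rightarrow> nat \<Rightarrow> nat \<Rightarrow> nat" where
  "Aseq K E x q 0 i = (if x i = kof K q then 1 else 0)"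
| "Aseq K E x q (Suc r) i = (Nof K q + 1 - deg E i) * Aseq K E x q r i
      + (\<Sum>j\<in>nbrs E i. min (Aseq K E x q r j) (LN (Nof K q)))"

primrec resv :: "nat \<Rightarrow> (nat \<Rightarrow> nat \<Rightarrow> bool) \<Rightarrow> (nat \<Rightarrow> nat) \<Rightarrow> nat \<Rightarrow> nat \<Rightarrow> rat list" where
  "resv K E x i 0 = replicate K 0"
| "resv K E x i (Suc q) = (resv K E x i q)[q mod K :=
      rnd (Nof K q) (of_nat (Aseq K E x q (RN (Nof K q)) i) / of_nat ((Nof K q + 1) ^ RN (Nof K q)))]"

definition ideal where
  "ideal K E x m i = (case cc K m of (q, r, u) \<Rightarrow>
     (to_nat (Some (q, r, u, Aseq K E x q r i, \<Sum>j\<in>nbrs E i. min (Aseq K E x q r j) u, resv K E x i q) :: st),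
      outv K (resv K E x i q), replicate (deg E i) (bitm u (Aseq K E x q r i))))"

lemma min_bit: "min a u + bitm u a = min a (Suc u)"
  by (simp add: bitm_def)

lemma sim:
  assumes net: "network n E l"
  shows "\<forall>i\<in>{1..n}. exec (Aut K) z0 None 0 E l x (Suc m) i = ideal K E x m i"
proof (induction m)
  case 0
  show ?case
    by (auto simp: ideal_def Aut_def stepA_def z0_def cc_def Let_def)
next
  case (Suc m)
  show ?case
  proof
    fix i assume i: "i \<in> {1..n}"
    obtain q r u where c: "cc K m = (q, r, u)" by (cases "cc K m") auto
    define S where "S = exec (Aut K) z0 None 0 E l x (Suc m)"
    define ms where "ms = map (\<lambda>k. let j = port_nbr E l i k in snd (snd (S j)) ! (l j i - 1)) [1..<deg E i + 1]"
    have ex: "exec (Aut K) z0 None 0 E l x (Suc (Suc m)) i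
        = Aut K (deg E i) (x i) (fst (S i)) (fst (snd (S i))) ms"
      by (simp add: S_def ms_def Let_def)
    have Si: "S i = ideal K E x m i" using Suc.IH i S_def by simp
    have sms: "sum_list ms = (\<Sum>j\<in>nbrs E i. bitm u (Aseq K E x q r j))"
      unfolding ms_def
    proof (rule msg_sum[OF net i])
      fix j assume "j \<in> nbrs E i"
      hence "j \<in> {1..n}" using nbrs_sub[OF net] by blast
      thus "snd (snd (S j)) = replicate (deg E j) (bitm u (Aseq K E x q r j))"
        using Suc.IH S_def c by (simp add: ideal_def)
    qed
    have tot: "(\<Sum>j\<in>nbrs E i. min (Aseq K E x q r j) u) + sum_list ms
        = (\<Sum>j\<in>nbrs E i. min (Aseq K E x q r j) (Suc u))"
      unfolding sms sum.distrib[symmetric] min_bit ..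
    have bnd: "u < LN (Nof K q)" "r < RN (Nof K q)" using cc_bounds[OF c] by auto
    show "exec (Aut K) z0 None 0 E l x (Suc (Suc m)) i = ideal K E x (Suc m) i"
    proof (cases "Suc u < LN (Nof K q)")
      case True
      then show ?thesis unfolding ex Si using c tot
        by (simp add: ideal_def Aut_def stepA_def cc_Suc nextc_def Let_def)
    next
      case F1: False
      hence su: "Suc u = LN (Nof K q)" using bnd by simp
      show ?thesis
      proof (cases "Suc r < RN (Nof K q)")
        case True
        then show ?thesis unfolding ex Si using c tot F1 su
          by (simp add: ideal_def Aut_def stepA_def cc_Suc nextc_def Let_def)
      next
        case False
        hence sr: "Suc r = RN (Nof K q)" using bnd by simp
        have tot': "(\<Sum>j\<in>nbrs E i. min (Aseq K E x q r j) u) + sum_list ms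
             = (\<Sum>j\<in>nbrs E i. min (Aseq K E x q r j) (LN (Nof K q)))" using tot su by simp
        have a': "(Nof K q + 1 - deg E i) * Aseq K E x q r i
             + ((\<Sum>j\<in>nbrs E i. min (Aseq K E x q r j) u) + sum_list ms)
             = Aseq K E x q (RN (Nof K q)) i" unfolding tot' sr[symmetric] by simp
        define acc where "acc = (\<Sum>j\<in>nbrs E i. min (Aseq K E x q r j) u)"
        define res where "res = resv K E x i q"
        define b where "b = (if x i = kof K (Suc q) then 1 else (0::nat))"
        define N where "N = Nof K q"
        have st: "stepA K (deg E i) (x i) (Some (q, r, u, Aseq K E x q r i, acc, res)) ms
           = (Some (Suc q, 0, 0, b, 0, res[q mod K := rnd N (of_nat ((N + 1 - deg E i) * Aseq K E x q r i + (acc + sum_list ms)) / of_nat ((N+1) ^ RN N))]),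
              outv K (res[q mod K := rnd N (of_nat ((N + 1 - deg E i) * Aseq K E x q r i + (acc + sum_list ms)) / of_nat ((N+1) ^ RN N))]),
              replicate (deg E i) (bitm 0 b))"
          using F1 False unfolding N_def b_def by (simp add: stepA_def Let_def)
        have "exec (Aut K) z0 None 0 E l x (Suc (Suc m)) i
           = Aut K (deg E i) (x i) (to_nat (Some (q, r, u, Aseq K E x q r i, acc, res) :: st)) (outv K res) ms"
          unfolding ex Si by (simp add: ideal_def c acc_def res_def)
        also have "\<dots> = (to_nat (Some (Suc q, 0, 0, b, 0, res[q mod K := rnd N (of_nat (Aseq K E x q (RN N) i) / of_nat ((N+1) ^ RN N))]) :: st),
              outv K (res[q mod K := rnd N (of_nat (Aseq K E x q (RN N) i) / of_nat ((N+1) ^ RN N))]),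
              replicate (deg E i) (bitm 0 b))"
          unfolding Aut_def from_nat_to_nat st a'[folded acc_def N_def] by simp
        also have "\<dots> = ideal K E x (Suc m) i"
          using c F1 False unfolding N_def b_def res_def
          by (simp add: ideal_def cc_Suc nextc_def del: of_nat_add of_nat_mult of_nat_power)
        finally show ?thesis .
      qed
    qed
  qed
qed



lemma deg_le:
  assumes net: "network n E l" and i: "i \<in> {1..n}"
  shows "deg E i \<le> n - 1"
proof -
  have "nbrs E i \<subseteq> {1..n} - {i}" using net by (auto simp: network_def nbrs_def)
  hence "card (nbrs E i) \<le> card ({1..n} - {i})" by (simp add: card_mono)
  also have "\<dots> = n - 1" using i by simp
  finally show ?thesis by (simp add: deg_def)
qed

lemma card_nbrs: "deg E i = card (nbrs E i)" by (simp add: deg_def)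

definition recur :: "nat \<Rightarrow> (nat \<Rightarrow> nat \<Rightarrow> bool) \<Rightarrow> nat \<Rightarrow> (nat \<Rightarrow> nat \<Rightarrow> rat) \<Rightarrow> bool" where
  "recur n E N v \<longleftrightarrow> (\<forall>r. \<forall>i\<in>{1..n}. of_nat (N+1) * v (Suc r) i
      = (of_nat (N+1) - of_nat (deg E i)) * v r i + (\<Sum>j\<in>nbrs E i. v r j))"

lemma recur_shift:
  assumes net: "network n E l" and rec: "recur n E N v" and i: "i \<in> {1..n}"
  shows "of_nat (N+1) * (v (Suc r) i - m)
      = (of_nat (N+1) - of_nat (deg E i)) * (v r i - m) + (\<Sum>j\<in>nbrs E i. v r j - m)"
proof -
  have "(\<Sum>j\<in>nbrs E i. v r j - m) = (\<Sum>j\<in>nbrs E i. v r j) - of_nat (deg E i) * m"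
    by (simp add: sum_subtractf card_nbrs)
  thus ?thesis using rec i unfolding recur_def by (simp add: algebra_simps)
qed

lemma recur_neg:
  assumes "recur n E N v" shows "recur n E N (\<lambda>r i. - v r i)"
  using assms unfolding recur_def by (simp add: sum_negf algebra_simps)

lemma lower_step:
  assumes net: "network n E l" and N: "N \<ge> n" and rec: "recur n E N v"
    and lo: "\<forall>i\<in>{1..n}. c \<le> v r i"
  shows "\<forall>i\<in>{1..n}. c \<le> v (Suc r) i"
proof
  fix i assume i: "i \<in> {1..n}"
  have d: "of_nat (deg E i) \<le> (of_nat N :: rat)" using deg_le[OF net i] N by simp
  have "0 \<le> (of_nat (N+1) - of_nat (deg E i)) * (v r i - c)"
    using d lo i by simp
  moreover have "0 \<le> (\<Sum>j\<in>nbrs E i. v r j - c)"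
    using lo nbrs_sub[OF net] by (intro sum_nonneg) auto
  ultimately have "0 \<le> of_nat (N+1) * (v (Suc r) i - c)"
    using recur_shift[OF net rec i, of r c] by simp
  thus "c \<le> v (Suc r) i" by (simp add: zero_le_mult_iff)
qed

lemma lower_iter:
  assumes net: "network n E l" and N: "N \<ge> n" and rec: "recur n E N v"
    and lo: "\<forall>i\<in>{1..n}. c \<le> v r i"
  shows "\<forall>i\<in>{1..n}. c \<le> v (r + s) i"
  by (induction s) (use lo lower_step[OF net N rec] in auto)

primrec reachw :: "(nat \<Rightarrow> nat \<Rightarrow> bool) \<Rightarrow> nat \<Rightarrow> nat \<Rightarrow> nat \<Rightarrow> bool" where
  "reachw E 0 a b = (a = b)"
| "reachw E (Suc s) a b = (reachw E s a b \<or> (\<exists>c. reachw E s a c \<and> E c b))"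

lemma propagate:
  assumes net: "network n E l" and N: "N \<ge> n" and rec: "recur n E N v"
    and lo: "\<forall>i\<in>{1..n}. m \<le> v r0 i" and a: "a \<in> {1..n}" and va: "m + \<delta> \<le> v r0 a"
    and d0: "0 \<le> \<delta>"
  shows "\<forall>b\<in>{1..n}. reachw E s a b \<longrightarrow> m + (1 / of_nat (N+1)) ^ s * \<delta> \<le> v (r0 + s) b"
proof (induction s)
  case 0
  then show ?case using va by simp
next
  case (Suc s)
  show ?case
  proof (intro ballI impI)
    fix b assume b: "b \<in> {1..n}" and w: "reachw E (Suc s) a b"
    define w where "w = (1 / of_nat (N+1) :: rat) ^ s * \<delta>"
    have w0: "0 \<le> w" using d0 by (simp add: w_def)
    have lo': "\<forall>i\<in>{1..n}. m \<le> v (r0 + s) i" using lower_iter[OF net N rec lo] by blast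
    have dd: "of_nat (deg E b) \<le> (of_nat N :: rat)" using deg_le[OF net b] N by simp
    have key: "w \<le> (of_nat (N+1) - of_nat (deg E b)) * (v (r0+s) b - m) + (\<Sum>j\<in>nbrs E b. v (r0+s) j - m)"
    proof -
      have s0: "0 \<le> (\<Sum>j\<in>nbrs E b. v (r0+s) j - m)"
        using lo' nbrs_sub[OF net] by (intro sum_nonneg) auto
      have t0: "0 \<le> (of_nat (N+1) - of_nat (deg E b)) * (v (r0+s) b - m)"
        using dd lo' b by simp
      from w consider "reachw E s a b" | c where "reachw E s a c" "E c b" by auto
      then show ?thesis
      proof cases
        case 1
        hence h: "w \<le> v (r0+s) b - m" using Suc.IH b unfolding w_def by auto
        have "v (r0+s) b - m \<le> (of_nat (N+1) - of_nat (deg E b)) * (v (r0+s) b - m)"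
        proof -
          have "0 \<le> (of_nat N - of_nat (deg E b)) * (v (r0+s) b - m)"
            using dd h w0 by (intro mult_nonneg_nonneg) auto
          thus ?thesis by (simp add: algebra_simps)
        qed
        then show ?thesis using h s0 by linarith
      next
        case 2
        have cV: "c \<in> {1..n}" using 2 net by (simp add: network_def)
        have cn: "c \<in> nbrs E b" using 2 net by (simp add: network_def nbrs_def)
        have h: "w \<le> v (r0+s) c - m" using Suc.IH cV 2 unfolding w_def by auto
        have "v (r0+s) c - m \<le> (\<Sum>j\<in>nbrs E b. v (r0+s) j - m)"
          using lo' nbrs_sub[OF net] cn finite_nbrs[OF net]
          by (intro member_le_sum) auto
        then show ?thesis using h t0 by linarith
      qed
    qed
    hence "w \<le> of_nat (N+1) * (v (Suc (r0 + s)) b - m)"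
      using recur_shift[OF net rec b, of "r0+s" m] by simp
    hence "w / of_nat (N+1) \<le> v (Suc (r0 + s)) b - m"
      by (simp add: divide_simps mult.commute)
    thus "m + (1 / of_nat (N+1)) ^ Suc s * \<delta> \<le> v (r0 + Suc s) b"
      unfolding w_def by (simp add: field_simps)
  qed
qed



lemma reachw_mono: "reachw E s a b \<Longrightarrow> reachw E (s + t) a b"
  by (induction t) auto

lemma reachw_sub:
  assumes net: "network n E l" and a: "a \<in> {1..n}"
  shows "reachw E s a b \<Longrightarrow> b \<in> {1..n}"
  by (induction s arbitrary: b) (use a net in \<open>auto simp: network_def\<close>)

lemma rtr_reachw: "E\<^sup>*\<^sup>* a b \<Longrightarrow> \<exists>t. reachw E t a b"
proof (induction rule: rtranclp_induct)
  case base
  then show ?case by (metis reachw.simps(1))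
next
  case (step y z)
  then obtain t where "reachw E t a y" by blast
  then show ?case using step by (metis reachw.simps(2))
qed

lemma stag:
  assumes "{b. reachw E (Suc s) a b} = {b. reachw E s a b}"
  shows "{b. reachw E (s + t) a b} = {b. reachw E s a b}"
proof (induction t)
  case 0 then show ?case by simp
next
  case (Suc t)
  have "{b. reachw E (Suc (s + t)) a b} = {b. reachw E (s+t) a b} \<union> {b. \<exists>c. reachw E (s+t) a c \<and> E c b}"
    by auto
  also have "\<dots> = {b. reachw E s a b} \<union> {b. \<exists>c. reachw E s a c \<and> E c b}" using Suc by auto
  also have "\<dots> = {b. reachw E (Suc s) a b}" by auto
  finally show ?case using assms by simp
qed

lemma cover:
  assumes net: "network n E l" and a: "a \<in> {1..n}"
  shows "{b. reachw E s a b} = {1..n} \<or> Suc s \<le> card {b. reachw E s a b}"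
proof (induction s)
  case 0
  have "{b. reachw E 0 a b} = {a}" by auto
  then show ?case by simp
next
  case (Suc s)
  let ?W = "\<lambda>s. {b. reachw E s a b}"
  have sub: "\<And>s. ?W s \<subseteq> {1..n}" using reachw_sub[OF net a] by blast
  have mono: "?W s \<subseteq> ?W (Suc s)" by auto
  show ?case
  proof (cases "?W s = {1..n}")
    case True
    then show ?thesis using sub[of "Suc s"] mono by blast
  next
    case False
    hence cs: "Suc s \<le> card (?W s)" using Suc by blast
    have "?W (Suc s) \<noteq> ?W s"
    proof
      assume st: "?W (Suc s) = ?W s"
      have "{1..n} \<subseteq> ?W s"
      proof
        fix b assume b: "b \<in> {1..n}"
        hence "E\<^sup>*\<^sup>* a b" using net a by (simp add: network_def)
        then obtain t where "reachw E t a b" using rtr_reachw by blast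
        hence "reachw E (s + t) a b" by (metis add.commute reachw_mono)
        thus "b \<in> ?W s" using stag[OF st, of t] by blast
      qed
      thus False using False sub by blast
    qed
    hence "?W s \<subset> ?W (Suc s)" using mono by blast
    hence "card (?W s) < card (?W (Suc s))"
      by (meson finite_atLeastAtMost finite_subset psubset_card_mono sub)
    then show ?thesis using cs by simp
  qed
qed

lemma cover_all:
  assumes net: "network n E l" and a: "a \<in> {1..n}" and N: "N \<ge> n" and b: "b \<in> {1..n}"
  shows "reachw E N a b"
proof -
  have sub: "{b. reachw E n a b} \<subseteq> {1..n}" using reachw_sub[OF net a] by blast
  have "card {b. reachw E n a b} \<le> n" using card_mono[OF _ sub] by simp
  hence "{b. reachw E n a b} = {1..n}" using cover[OF net a, of n] by linarith
  hence "reachw E n a b" using b by blast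
  thus ?thesis using reachw_mono[of E n a b "N - n"] N by simp
qed



lemma argmax_ex:
  assumes "finite A" "A \<noteq> {}"
  shows "\<exists>a\<in>A. \<forall>i\<in>A. (f i :: rat) \<le> f a"
proof -
  have "Max (f ` A) \<in> f ` A" using assms by simp
  then obtain a where "a \<in> A" "f a = Max (f ` A)" by auto
  moreover have "\<forall>i\<in>A. f i \<le> Max (f ` A)" using assms(1) by (auto intro: Max_ge)
  ultimately show ?thesis by metis
qed

lemma contract:
  assumes net: "network n E l" and N: "N \<ge> n" and rec: "recur n E N v"
    and b: "\<forall>i\<in>{1..n}. lo \<le> v r i \<and> v r i \<le> hi"
  shows "\<exists>lo' hi'. (\<forall>i\<in>{1..n}. lo' \<le> v (r + N) i \<and> v (r + N) i \<le> hi')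
           \<and> hi' - lo' \<le> (1 - (1 / of_nat (N+1)) ^ N) * (hi - lo)"
proof -
  have n1: "n \<ge> 1" using net by (simp add: network_def)
  have fin: "finite {1..n}" and ne: "{1..n} \<noteq> {}" using n1 by auto
  obtain a where a: "a \<in> {1..n}" "\<forall>i\<in>{1..n}. v r i \<le> v r a"
    using argmax_ex[OF fin ne, of "v r"] by blast
  obtain c where c: "c \<in> {1..n}" "\<forall>i\<in>{1..n}. - v r i \<le> - v r c"
    using argmax_ex[OF fin ne, of "\<lambda>i. - v r i"] by blast
  define M where "M = v r a"
  define m where "m = v r c"
  define w :: rat where "w = (1 / of_nat (N+1)) ^ N"
  have w0: "0 \<le> w" "w \<le> 1" by (auto simp: w_def power_le_one)
  have d0: "0 \<le> M - m" using a c unfolding M_def m_def by force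
  have lom: "\<forall>i\<in>{1..n}. m \<le> v r i" using c unfolding m_def by force
  have hiM: "\<forall>i\<in>{1..n}. - M \<le> - v r i" using a unfolding M_def by force
  have L: "\<forall>i\<in>{1..n}. m + w * (M - m) \<le> v (r + N) i"
    using propagate[OF net N rec lom a(1), of "M - m" N] d0 cover_all[OF net a(1) N]
    unfolding M_def w_def by auto
  have U: "\<forall>i\<in>{1..n}. - M + w * (M - m) \<le> - v (r + N) i"
    using propagate[OF net N recur_neg[OF rec] hiM c(1), of "M - m" N] d0 cover_all[OF net c(1) N]
    unfolding m_def w_def by auto
  have "lo \<le> m" "M \<le> hi" using b a c unfolding M_def m_def by auto
  hence "(1 - w) * (M - m) \<le> (1 - w) * (hi - lo)" using w0 by (intro mult_left_mono) auto
  moreover have "(M - w * (M - m)) - (m + w * (M - m)) \<le> (1 - w) * (M - m)"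
    using mult_nonneg_nonneg[OF w0(1) d0] by (simp add: algebra_simps)
  ultimately show ?thesis using L U unfolding w_def
    by (intro exI[of _ "m + w * (M - m)"] exI[of _ "M - w * (M - m)"]) (auto simp: w_def)
qed

lemma iterate:
  assumes net: "network n E l" and N: "N \<ge> n" and rec: "recur n E N v"
    and b: "\<forall>i\<in>{1..n}. 0 \<le> v 0 i \<and> v 0 i \<le> 1"
  shows "\<exists>lo hi. (\<forall>i\<in>{1..n}. lo \<le> v (s * N) i \<and> v (s * N) i \<le> hi)
           \<and> hi - lo \<le> (1 - (1 / of_nat (N+1)) ^ N) ^ s"
proof (induction s)
  case 0
  then show ?case using b by (intro exI[of _ 0] exI[of _ 1]) auto
next
  case (Suc s)
  then obtain lo hi where h: "\<forall>i\<in>{1..n}. lo \<le> v (s * N) i \<and> v (s * N) i \<le> hi"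
    "hi - lo \<le> (1 - (1 / of_nat (N+1)) ^ N) ^ s" by blast
  obtain lo' hi' where h': "\<forall>i\<in>{1..n}. lo' \<le> v (s * N + N) i \<and> v (s * N + N) i \<le> hi'"
    "hi' - lo' \<le> (1 - (1 / of_nat (N+1)) ^ N) * (hi - lo)"
    using contract[OF net N rec h(1)] by blast
  have c0: "0 \<le> 1 - (1 / of_nat (N+1) :: rat) ^ N" by (simp add: power_le_one)
  have "(1 - (1 / of_nat (N+1)) ^ N) * (hi - lo) \<le> (1 - (1 / of_nat (N+1)) ^ N) * (1 - (1 / of_nat (N+1)) ^ N) ^ s"
    using h(2) c0 by (rule mult_left_mono)
  hence "hi' - lo' \<le> (1 - (1 / of_nat (N+1)) ^ N) ^ Suc s" using h'(2) by simp
  moreover have "Suc s * N = s * N + N" by simp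
  ultimately show ?case using h'(1) by metis
qed

lemma double_count:
  assumes net: "network n E l"
  shows "(\<Sum>i\<in>{1..n}. \<Sum>j\<in>nbrs E i. f j) = (\<Sum>j\<in>{1..n}. of_nat (deg E j) * (f j :: rat))"
proof -
  have nb: "\<And>i. nbrs E i = {j\<in>{1..n}. E i j}" using net by (auto simp: network_def nbrs_def)
  have "(\<Sum>i\<in>{1..n}. \<Sum>j\<in>nbrs E i. f j) = (\<Sum>i\<in>{1..n}. \<Sum>j\<in>{1..n}. if E i j then f j else 0)"
    unfolding nb by (rule sum.cong[OF refl], rule sum.inter_filter, simp)
  also have "\<dots> = (\<Sum>j\<in>{1..n}. \<Sum>i\<in>{1..n}. if E i j then f j else 0)" by (rule sum.swap)
  also have "\<dots> = (\<Sum>j\<in>{1..n}. \<Sum>i\<in>nbrs E j. f j)"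
  proof (rule sum.cong[OF refl])
    fix j assume "j \<in> {1..n}"
    have "\<And>i. E i j = E j i" using net by (auto simp: network_def)
    hence "nbrs E j = {i\<in>{1..n}. E i j}" using nb by auto
    thus "(\<Sum>i\<in>{1..n}. if E i j then f j else 0) = (\<Sum>i\<in>nbrs E j. f j)"
      by (simp only: sum.inter_filter[OF finite_atLeastAtMost])
  qed
  also have "\<dots> = (\<Sum>j\<in>{1..n}. of_nat (deg E j) * f j)" by (simp add: card_nbrs)
  finally show ?thesis .
qed

lemma conserve:
  assumes net: "network n E l" and rec: "recur n E N v"
  shows "(\<Sum>i\<in>{1..n}. v (Suc r) i) = (\<Sum>i\<in>{1..n}. v r i)"
proof -
  have "of_nat (N+1) * (\<Sum>i\<in>{1..n}. v (Suc r) i) = (\<Sum>i\<in>{1..n}. of_nat (N+1) * v (Suc r) i)"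
    by (simp add: sum_distrib_left)
  also have "\<dots> = (\<Sum>i\<in>{1..n}. (of_nat (N+1) - of_nat (deg E i)) * v r i + (\<Sum>j\<in>nbrs E i. v r j))"
    using rec unfolding recur_def by (intro sum.cong) auto
  also have "\<dots> = (\<Sum>i\<in>{1..n}. of_nat (N+1) * v r i) - (\<Sum>i\<in>{1..n}. of_nat (deg E i) * v r i)
                 + (\<Sum>i\<in>{1..n}. \<Sum>j\<in>nbrs E i. v r j)"
    by (simp add: sum.distrib sum_subtractf algebra_simps)
  also have "\<dots> = of_nat (N+1) * (\<Sum>i\<in>{1..n}. v r i)"
    unfolding double_count[OF net] by (simp add: sum_distrib_left)
  finally show ?thesis by simp
qed

lemma conserve_all:
  assumes net: "network n E l" and rec: "recur n E N v"
  shows "(\<Sum>i\<in>{1..n}. v r i) = (\<Sum>i\<in>{1..n}. v 0 i)"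
  by (induction r) (use conserve[OF net rec] in auto)



lemma rat_uniq:
  fixes a1 a2 :: int and b1 b2 N :: nat
  assumes b1: "1 \<le> b1" "b1 \<le> N" and b2: "1 \<le> b2" "b2 \<le> N"
    and close: "\<bar>of_int a1 / of_nat b1 - of_int a2 / of_nat b2\<bar> < (1::rat) / of_nat N ^ 2"
  shows "(of_int a1 / of_nat b1 :: rat) = of_int a2 / of_nat b2"
proof (rule ccontr)
  assume ne: "(of_int a1 / of_nat b1 :: rat) \<noteq> of_int a2 / of_nat b2"
  have B1: "(of_nat b1 :: rat) > 0" and B2: "(of_nat b2 :: rat) > 0" using b1 b2 by auto
  have "a1 * int b2 \<noteq> a2 * int b1"
  proof
    assume "a1 * int b2 = a2 * int b1"
    hence "(of_int a1 :: rat) * of_nat b2 = of_int a2 * of_nat b1"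
      by (metis of_int_mult of_int_of_nat_eq)
    thus False using ne B1 B2 by (simp add: divide_simps)
  qed
  hence one: "1 \<le> \<bar>a1 * int b2 - a2 * int b1\<bar>" by linarith
  have eq: "of_int a1 / of_nat b1 - of_int a2 / of_nat b2
      = (of_int (a1 * int b2 - a2 * int b1) :: rat) / (of_nat b1 * of_nat b2)"
    using B1 B2 by (simp add: field_simps)
  have "(1::rat) \<le> \<bar>of_int (a1 * int b2 - a2 * int b1)\<bar>"
    using one by (metis of_int_1_le_iff of_int_abs)
  hence "(1::rat) / (of_nat b1 * of_nat b2) \<le> \<bar>of_int (a1 * int b2 - a2 * int b1)\<bar> / (of_nat b1 * of_nat b2)"
    using B1 B2 by (intro divide_right_mono) auto
  also have "\<dots> = \<bar>of_int a1 / of_nat b1 - of_int a2 / of_nat b2\<bar>"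
    unfolding eq using B1 B2 by (simp add: abs_divide abs_mult)
  finally have h1: "(1::rat) / (of_nat b1 * of_nat b2) \<le> \<bar>of_int a1 / of_nat b1 - of_int a2 / of_nat b2\<bar>" .
  have "(of_nat b1 * of_nat b2 :: rat) \<le> of_nat N * of_nat N"
    using b1 b2 by (intro mult_mono) auto
  hence "(1::rat) / of_nat N ^ 2 \<le> 1 / (of_nat b1 * of_nat b2)"
    using B1 B2 by (simp add: power2_eq_square frac_le)
  thus False using h1 close by linarith
qed

lemma rnd_eq:
  fixes a :: int
  assumes N: "N \<ge> 1" and b: "1 \<le> b" "b \<le> N"
    and close: "\<bar>e - of_int a / of_nat b\<bar> < 1 / (2 * of_nat N ^ 2)"
  shows "rnd N e = of_int a / of_nat b"
proof -
  let ?P = "\<lambda>p. \<exists>a::int. \<exists>b::nat. 1 \<le> b \<and> b \<le> N \<and> p = of_int a / of_nat b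
                         \<and> \<bar>e - p\<bar> < 1 / (2 * of_nat N ^ 2)"
  have "?P (of_int a / of_nat b)" using b close by blast
  hence "?P (rnd N e)" unfolding rnd_def by (rule someI)
  then obtain a' b' where ab: "1 \<le> b'" "b' \<le> N" "rnd N e = of_int a' / of_nat b'"
    "\<bar>e - rnd N e\<bar> < 1 / (2 * of_nat N ^ 2)" by blast
  have "\<bar>of_int a' / of_nat b' - of_int a / of_nat b\<bar> < (1::rat) / of_nat N ^ 2"
    using ab(3,4) close by (simp add: abs_diff_less_iff field_simps)
  thus ?thesis using rat_uniq[OF ab(1,2) b] ab(3) by simp
qed



primrec Bseq :: "nat \<Rightarrow> nat \<Rightarrow> (nat \<Rightarrow> nat \<Rightarrow> bool) \<Rightarrow> (nat \<Rightarrow> nat) \<Rightarrow> nat \<Rightarrow> nat \<Rightarrow> nat" where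
  "Bseq N k E x 0 i = (if x i = k then 1 else 0)"
| "Bseq N k E x (Suc r) i = (N + 1 - deg E i) * Bseq N k E x r i + (\<Sum>j\<in>nbrs E i. Bseq N k E x r j)"

lemma Bseq_bound:
  assumes net: "network n E l" and N: "N \<ge> n"
  shows "\<forall>i\<in>{1..n}. Bseq N k E x r i \<le> (N+1) ^ r"
proof (induction r)
  case 0 then show ?case by simp
next
  case (Suc r)
  show ?case
  proof
    fix i assume i: "i \<in> {1..n}"
    have d: "deg E i \<le> N + 1" using deg_le[OF net i] N by simp
    have "(\<Sum>j\<in>nbrs E i. Bseq N k E x r j) \<le> (\<Sum>j\<in>nbrs E i. (N+1) ^ r)"
      using Suc nbrs_sub[OF net] by (intro sum_mono) auto
    also have "\<dots> = deg E i * (N+1) ^ r" by (simp add: card_nbrs)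
    finally have s: "(\<Sum>j\<in>nbrs E i. Bseq N k E x r j) \<le> deg E i * (N+1) ^ r" .
    have "Bseq N k E x r i \<le> (N+1) ^ r" using Suc i by blast
    hence m: "(N + 1 - deg E i) * Bseq N k E x r i \<le> (N + 1 - deg E i) * (N+1) ^ r"
      by (rule mult_left_mono) simp
    have "Bseq N k E x (Suc r) i \<le> (N + 1 - deg E i) * (N+1) ^ r + deg E i * (N+1) ^ r"
      unfolding Bseq.simps by (rule add_mono[OF m s])
    also have "\<dots> = (N+1) ^ Suc r" using d by (simp add: add_mult_distrib[symmetric])
    finally show "Bseq N k E x (Suc r) i \<le> (N+1) ^ Suc r" .
  qed
qed

lemma Aseq_Bseq:
  assumes net: "network n E l" and N: "Nof K q \<ge> n"
  shows "r \<le> RN (Nof K q) \<Longrightarrow> \<forall>i\<in>{1..n}. Aseq K E x q r i = Bseq (Nof K q) (kof K q) E x r i"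
proof (induction r)
  case 0 then show ?case by simp
next
  case (Suc r)
  hence IH: "\<forall>i\<in>{1..n}. Aseq K E x q r i = Bseq (Nof K q) (kof K q) E x r i" by simp
  show ?case
  proof
    fix i assume i: "i \<in> {1..n}"
    have "(\<Sum>j\<in>nbrs E i. min (Aseq K E x q r j) (LN (Nof K q))) = (\<Sum>j\<in>nbrs E i. Bseq (Nof K q) (kof K q) E x r j)"
    proof (rule sum.cong[OF refl])
      fix j assume "j \<in> nbrs E i"
      hence j: "j \<in> {1..n}" using nbrs_sub[OF net] by blast
      have "Bseq (Nof K q) (kof K q) E x r j \<le> (Nof K q + 1) ^ r" using Bseq_bound[OF net N] j by blast
      also have "\<dots> \<le> (Nof K q + 1) ^ RN (Nof K q)" using Suc.prems by (intro power_increasing) auto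
      finally show "min (Aseq K E x q r j) (LN (Nof K q)) = Bseq (Nof K q) (kof K q) E x r j"
        using IH j by (simp add: LN_def)
    qed
    thus "Aseq K E x q (Suc r) i = Bseq (Nof K q) (kof K q) E x (Suc r) i" using IH i by simp
  qed
qed

lemma Bseq_recur:
  assumes net: "network n E l" and N: "N \<ge> n"
  shows "recur n E N (\<lambda>r i. of_nat (Bseq N k E x r i) / of_nat (N+1) ^ r)"
  unfolding recur_def
proof (intro allI ballI)
  fix r i assume i: "i \<in> {1..n}"
  have d: "deg E i \<le> N + 1" using deg_le[OF net i] N by simp
  have P: "(of_nat (N+1) :: rat) ^ r > 0" by simp
  have "(of_nat (N+1) :: rat) * (of_nat (Bseq N k E x (Suc r) i) / of_nat (N+1) ^ Suc r)
      = of_nat (Bseq N k E x (Suc r) i) / of_nat (N+1) ^ r" by simp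
  also have "\<dots> = ((of_nat (N+1) - of_nat (deg E i)) * of_nat (Bseq N k E x r i)
        + (\<Sum>j\<in>nbrs E i. of_nat (Bseq N k E x r j))) / of_nat (N+1) ^ r"
    using d by (simp add: of_nat_diff)
  also have "\<dots> = (of_nat (N+1) - of_nat (deg E i)) * (of_nat (Bseq N k E x r i) / of_nat (N+1) ^ r)
        + (\<Sum>j\<in>nbrs E i. of_nat (Bseq N k E x r j) / of_nat (N+1) ^ r)"
    by (simp add: add_divide_distrib sum_divide_distrib)
  finally show "(of_nat (N+1) :: rat) * (of_nat (Bseq N k E x (Suc r) i) / of_nat (N+1) ^ Suc r)
      = (of_nat (N+1) - of_nat (deg E i)) * (of_nat (Bseq N k E x r i) / of_nat (N+1) ^ r)
        + (\<Sum>j\<in>nbrs E i. of_nat (Bseq N k E x r j) / of_nat (N+1) ^ r)" .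
qed

lemma good_phase:
  assumes net: "network n E l" and N: "N \<ge> n" and i: "i \<in> {1..n}"
  shows "rnd N (of_nat (Bseq N k E x (RN N) i) / of_nat ((N+1) ^ RN N)) = prop_k n x k"
proof -
  define v where "v = (\<lambda>r i. (of_nat (Bseq N k E x r i) :: rat) / of_nat (N+1) ^ r)"
  have rec: "recur n E N v" unfolding v_def by (rule Bseq_recur[OF net N])
  have n1: "n \<ge> 1" using net by (simp add: network_def)
  have N1: "N \<ge> 1" using n1 N by simp
  have b0: "\<forall>i\<in>{1..n}. 0 \<le> v 0 i \<and> v 0 i \<le> 1" by (simp add: v_def)
  obtain lo hi where h: "\<forall>i\<in>{1..n}. lo \<le> v (sN N * N) i \<and> v (sN N * N) i \<le> hi"
      "hi - lo \<le> (1 - (1 / of_nat (N+1)) ^ N) ^ sN N"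
    using iterate[OF net N rec b0] by blast
  have R: "sN N * N = RN N" by (simp add: RN_def)
  define c where "c = card {j\<in>{1..n}. x j = k}"
  have "(\<Sum>j\<in>{1..n}. v 0 j) = (\<Sum>j\<in>{1..n}. if x j = k then 1 else 0)"
    by (auto simp: v_def intro!: sum.cong)
  also have "\<dots> = (\<Sum>j\<in>{j\<in>{1..n}. x j = k}. 1)"
    by (rule sum.inter_filter[symmetric]) simp
  also have "\<dots> = of_nat c" by (simp add: c_def)
  finally have s0: "(\<Sum>j\<in>{1..n}. v 0 j) = of_nat c" .
  have sR: "(\<Sum>j\<in>{1..n}. v (RN N) j) = of_nat c" using conserve_all[OF net rec] s0 by simp
  have "(\<Sum>j\<in>{1..n}. lo) \<le> (\<Sum>j\<in>{1..n}. v (RN N) j)" using h(1) R by (intro sum_mono) auto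
  hence lo: "of_nat n * lo \<le> of_nat c" using sR by simp
  have "(\<Sum>j\<in>{1..n}. v (RN N) j) \<le> (\<Sum>j\<in>{1..n}. hi)" using h(1) R by (intro sum_mono) auto
  hence hi: "of_nat c \<le> of_nat n * hi" using sR by simp
  have np: "(of_nat n :: rat) > 0" using n1 by simp
  define p where "p = (of_int (int c) :: rat) / of_nat n"
  have "lo \<le> p" "p \<le> hi" using lo hi np unfolding p_def by (auto simp: field_simps)
  moreover have "lo \<le> v (RN N) i" "v (RN N) i \<le> hi" using h(1) R i by auto
  ultimately have "\<bar>v (RN N) i - p\<bar> \<le> hi - lo" by linarith
  also have "\<dots> < 1 / (2 * of_nat N ^ 2)" using h(2) sN_prop[OF N1] by linarith
  finally have cl: "\<bar>v (RN N) i - p\<bar> < 1 / (2 * of_nat N ^ 2)" .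
  have "rnd N (v (RN N) i) = p" unfolding p_def using rnd_eq[OF N1 _ N, of "v (RN N) i" "int c"] n1 cl p_def by simp
  moreover have "v (RN N) i = of_nat (Bseq N k E x (RN N) i) / of_nat ((N+1) ^ RN N)"
    by (simp add: v_def)
  moreover have "p = prop_k n x k" by (simp add: p_def prop_k_def c_def)
  ultimately show ?thesis by simp
qed



lemma length_resv: "length (resv K E x i q) = K"
  by (induction q) auto

lemma resv_good:
  assumes net: "network n E l" and K: "K \<ge> 1" and i: "i \<in> {1..n}"
  shows "\<forall>k'<K. (\<exists>q'<q. (n-1)*K \<le> q' \<and> q' mod K = k') \<longrightarrow> resv K E x i q ! k' = prop_k n x (Suc k')"
proof (induction q)
  case 0 then show ?case by simp
next
  case (Suc q)
  show ?case
  proof (intro allI impI)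
    fix k' assume k': "k' < K" and ex: "\<exists>q'<Suc q. (n-1)*K \<le> q' \<and> q' mod K = k'"
    have qm: "q mod K < length (resv K E x i q)" using K by (simp add: length_resv)
    show "resv K E x i (Suc q) ! k' = prop_k n x (Suc k')"
    proof (cases "k' = q mod K")
      case True
      then obtain q' where q': "q' \<le> q" "(n-1)*K \<le> q'" using ex less_Suc_eq_le by blast
      hence "(n-1)*K \<le> q" by simp
      hence "(n-1)*K div K \<le> q div K" by (rule div_le_mono)
      hence nN: "n \<le> Nof K q" using K by (simp add: Nof_def)
      have "Aseq K E x q (RN (Nof K q)) i = Bseq (Nof K q) (kof K q) E x (RN (Nof K q)) i"
        using Aseq_Bseq[OF net nN] i by blast
      moreover have "kof K q = Suc k'" using True by (simp add: kof_def)
      ultimately show ?thesis using True qm good_phase[OF net nN i, of "kof K q" x]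
        by (simp del: of_nat_power)
    next
      case False
      then obtain q' where "q' < q" "(n-1)*K \<le> q'" "q' mod K = k'" using ex
        by (metis less_Suc_eq)
      hence "resv K E x i q ! k' = prop_k n x (Suc k')" using Suc k' by blast
      then show ?thesis using False by simp
    qed
  qed
qed

lemma resv_final:
  assumes net: "network n E l" and K: "K \<ge> 1" and i: "i \<in> {1..n}" and q: "q \<ge> n * K"
  shows "outv K (resv K E x i q) = proportions K n x"
proof -
  have n1: "n \<ge> 1" using net by (simp add: network_def)
  have "\<And>k. k \<in> set [1..<K+1] \<Longrightarrow> resv K E x i q ! (k - 1) = prop_k n x k"
  proof -
    fix k assume "k \<in> set [1..<K+1]"
    hence k: "1 \<le> k" "k \<le> K" by auto
    define q' where "q' = (n-1)*K + (k-1)"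
    have nK: "n * K = (n-1)*K + K" using n1 by (cases n) auto
    have "q' < n * K" using k unfolding q'_def nK by linarith
    hence "q' < q" using q by simp
    moreover have "q' mod K = k - 1"
    proof -
      have "q' mod K = (k - 1) mod K" unfolding q'_def by (rule mod_mult_self3)
      thus ?thesis using k by simp
    qed
    ultimately have ex: "\<exists>q'<q. (n-1)*K \<le> q' \<and> q' mod K = k - 1" unfolding q'_def by auto
    have "k - 1 < K" using k by simp
    hence "resv K E x i q ! (k-1) = prop_k n x (Suc (k-1))"
      using resv_good[OF net K i] ex by blast
    thus "resv K E x i q ! (k - 1) = prop_k n x k" using k by simp
  qed
  thus ?thesis unfolding outv_def proportions_def by simp
qed

lemma iter_u: "u + j < LN (Nof K q) \<Longrightarrow> (nextc K ^^ j) (q, r, u) = (q, r, u + j)"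
  by (induction j) (auto simp: nextc_def)

lemma one_round:
  assumes "r < RN (Nof K q)"
  shows "(nextc K ^^ LN (Nof K q)) (q, r, 0)
     = (if Suc r < RN (Nof K q) then (q, Suc r, 0) else (Suc q, 0, 0))"
proof -
  have L: "LN (Nof K q) = Suc (LN (Nof K q) - 1)" using LN_pos[of "Nof K q"] by simp
  have "(nextc K ^^ (LN (Nof K q) - 1)) (q, r, 0) = (q, r, LN (Nof K q) - 1)"
    using iter_u[of 0 "LN (Nof K q) - 1" K q r] LN_pos[of "Nof K q"] by simp
  hence "(nextc K ^^ LN (Nof K q)) (q, r, 0) = nextc K (q, r, LN (Nof K q) - 1)"
    by (subst L) simp
  also have "\<dots> = (if Suc r < RN (Nof K q) then (q, Suc r, 0) else (Suc q, 0, 0))"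
    using LN_pos[of "Nof K q"] by (simp add: nextc_def)
  finally show ?thesis .
qed

lemma rounds: "r < RN (Nof K q) \<Longrightarrow> \<exists>j. (nextc K ^^ j) (q, 0, 0) = (q, r, 0)"
proof (induction r)
  case 0 then show ?case by (metis funpow_0)
next
  case (Suc r)
  then obtain j where j: "(nextc K ^^ j) (q, 0, 0) = (q, r, 0)" by auto
  have "(nextc K ^^ (LN (Nof K q) + j)) (q, 0, 0) = (q, Suc r, 0)"
    using one_round[of r K q] Suc.prems j by (simp add: funpow_add)
  then show ?case by blast
qed

lemma phase_reach: "\<exists>m. cc K m = (q, 0, 0)"
proof (induction q)
  case 0 then show ?case by (metis cc_def funpow_0)
next
  case (Suc q)
  then obtain m where m: "cc K m = (q, 0, 0)" by blast
  have R: "RN (Nof K q) - 1 < RN (Nof K q)" using sN_pos[OF Nof_pos[of K q]] by simp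
  obtain j where j: "(nextc K ^^ j) (q, 0, 0) = (q, RN (Nof K q) - 1, 0)" using rounds[OF R] by blast
  have "(nextc K ^^ (LN (Nof K q) + j + m)) (0, 0, 0) = (Suc q, 0, 0)"
    using one_round[OF R] j m R sN_pos[OF Nof_pos[of K q]] by (simp add: funpow_add cc_def)
  then show ?case unfolding cc_def by blast
qed

lemma phase_mono: "fst (cc K m) \<le> fst (cc K (m + j))"
proof (induction j)
  case 0 then show ?case by simp
next
  case (Suc j)
  have "fst (cc K (m + j)) \<le> fst (nextc K (cc K (m + j)))"
    by (cases "cc K (m + j)") (auto simp: nextc_def)
  then show ?case using Suc by (simp add: cc_Suc)
qed

theorem theorem4:
  fixes K :: nat
  shows "computable_inf_mem {1..K} (Yset K) None (proportions K)"
  unfolding computable_inf_mem_def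
proof (intro conjI)
  show "finite {1..K}" by simp
  show "countable (Yset K)" by (rule countableI_type)
  show "None \<in> Yset K" by (simp add: Yset_def)
  show "\<exists>(A :: nat \<Rightarrow> nat \<Rightarrow> nat \<Rightarrow> rat list option \<Rightarrow> nat list \<Rightarrow> nat \<times> rat list option \<times> nat list)
       (z0 :: nat \<Rightarrow> nat) (M :: nat set) (m0 :: nat).
      finite M \<and> m0 \<in> M \<and>
      (\<forall>d x z y ms. fst (snd (A d x z y ms)) \<in> Yset K
                    \<and> length (snd (snd (A d x z y ms))) = d
                    \<and> set (snd (snd (A d x z y ms))) \<subseteq> M) \<and>
      (\<forall>n E l x. network n E l \<and> (\<forall>i\<in>{1..n}. x i \<in> {1..K}) \<longrightarrow>
          has_final_output A z0 None m0 E l x n (proportions K n x))"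
  proof (intro exI conjI allI impI)
    show "finite {0::nat, 1}" by simp
    show "(0::nat) \<in> {0, 1}" by simp
    fix d x z y ms
    show "fst (snd (Aut K d x z y ms)) \<in> Yset K" "length (snd (snd (Aut K d x z y ms))) = d"
         "set (snd (snd (Aut K d x z y ms))) \<subseteq> {0, 1}" using Aut_props by blast+
  next
    fix n E l x
    assume h: "network n E l \<and> (\<forall>i\<in>{1..n}. x i \<in> {1..K})"
    hence net: "network n E l" by simp
    have n1: "n \<ge> 1" using net by (simp add: network_def)
    hence "x 1 \<in> {1..K}" using h by simp
    hence K: "K \<ge> 1" by simp
    obtain m0 where m0: "cc K m0 = (n * K, 0, 0)" using phase_reach by blast
    show "has_final_output (Aut K) z0 None 0 E l x n (proportions K n x)"
      unfolding has_final_output_def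
    proof (intro exI allI impI ballI)
      fix t i assume t: "Suc m0 \<le> t" and i: "i \<in> {1..n}"
      then obtain m where tm: "t = Suc m" and mm: "m0 \<le> m" by (metis Suc_le_D Suc_le_mono)
      obtain q r u where c: "cc K m = (q, r, u)" by (cases "cc K m") auto
      have "fst (cc K m0) \<le> fst (cc K (m0 + (m - m0)))" by (rule phase_mono)
      hence q: "n * K \<le> q" using m0 c mm by simp
      have "exec (Aut K) z0 None 0 E l x t i = ideal K E x m i" using sim[OF net] i tm by blast
      thus "fst (snd (exec (Aut K) z0 None 0 E l x t i)) = proportions K n x"
        using resv_final[OF net K i q] c by (simp add: ideal_def)
    qed
  qed
qed


end
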